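(* Let $n\ge2$, $H>1$, $\mu>0$. Assume the hyperbolic Delaunay unduloid $\mathcal{D}_H(\mu)$ is not a cylinder, i.e. its profile function $\varphi$ is nonconstant. Normalize $\varphi$ so that $\varphi(0)=\alpha_-(\mu)=\min\varphi$, and let $\tau(\mu)$ be its period. Let $$a(t)=\frac{\varphi'(t)}{\cos\varphi(t)\sqrt{1+\varphi'(t)^2}},$$ regarded as a function on $\mathcal{D}_H(\mu)$. Then: 1. $(\Delta-V)a=0$; 2. $a$ vanishes exactly at the points $t=k\tau(\mu)/2$, $k\in\mathbb{Z}$; 3. $a'$ has exactly two zeros $\zeta_1(\mu),\zeta_2(\mu)$ in $[0,\tau(\mu)]$, and they satisfy $0<\zeta_1(\mu)<\tau(\mu)/2<\zeta_2(\mu)<\tau(\mu)$.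
   Context: Use the upper half-space model $\{(x_1,\dots,x_n,y):y>0\}$ of $\mathbb{H}^{n+1}$. The function $\varphi:\mathbb{R}\to(0,\pi/2)$ solves $$\mu=\frac{(\tan\varphi)^{n-1}}{\cos\varphi\sqrt{1+\varphi'^2}}-H(\tan\varphi)^n.$$ The unduloid $\mathcal{D}_H(\mu)$ is parametrized by $\Phi(t,\omega)=(e^t\sin\varphi(t)\omega,e^t\cos\varphi(t))$; it has constant normalized mean curvature $H$. The function $\varphi$ is $\tau(\mu)$-periodic and symmetric about the points $k\tau(\mu)/2$. $\Delta$ is the non-negative Laplace–Beltrami operator, and $V=\|B\|^2-n$. The function $a$ equals $\langle N,\mathcal{Y}\rangle$, where $N$ is the unit normal and $\mathcal{Y}$ is the Killing field of hyperbolic translation along the axis. *)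

theory Defs
  imports "HOL-Analysis.Analysis"
begin

text \<open>Rotational hypersurface in the upper half-space model of hyperbolic (n+1)-space,
  parametrized by Phi(t,w) = (e^t sin(phi t) w, e^t cos(phi t)), w in S^(n-1).\<close>

definition prof_r :: "(real \<Rightarrow> real) \<Rightarrow> real \<Rightarrow> real" where
  "prof_r \<phi> t = exp t * sin (\<phi> t)"

definition prof_y :: "(real \<Rightarrow> real) \<Rightarrow> real \<Rightarrow> real" where
  "prof_y \<phi> t = exp t * cos (\<phi> t)"

definition prof_speed :: "(real \<Rightarrow> real) \<Rightarrow> real \<Rightarrow> real" where
  "prof_speed \<phi> t = sqrt ((deriv (prof_r \<phi>) t)\<^sup>2 + (deriv (prof_y \<phi>) t)\<^sup>2)"

text \<open>Induced hyperbolic metric: g = A(t)^2 dt^2 + B(t)^2 g_{S^(n-1)}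
  (hyperbolic metric = Euclidean metric divided by y^2).\<close>
definition metA :: "(real \<Rightarrow> real) \<Rightarrow> real \<Rightarrow> real" where
  "metA \<phi> t = prof_speed \<phi> t / prof_y \<phi> t"

definition metB :: "(real \<Rightarrow> real) \<Rightarrow> real \<Rightarrow> real" where
  "metB \<phi> t = prof_r \<phi> t / prof_y \<phi> t"

text \<open>Non-negative Laplace--Beltrami operator of the metric A^2 dt^2 + B^2 g_{S^(n-1)}
  applied to a function f depending only on t.\<close>
definition lap_rot :: "nat \<Rightarrow> (real \<Rightarrow> real) \<Rightarrow> (real \<Rightarrow> real) \<Rightarrow> real \<Rightarrow> real" where
  "lap_rot n \<phi> f t =
     - (1 / (metA \<phi> t * metB \<phi> t ^ (n - 1))) *
       deriv (\<lambda>s. metB \<phi> s ^ (n - 1) / metA \<phi> s * deriv f s) t"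

definition nrm_r :: "(real \<Rightarrow> real) \<Rightarrow> real \<Rightarrow> real" where
  "nrm_r \<phi> t = deriv (prof_y \<phi>) t / prof_speed \<phi> t"

definition nrm_y :: "(real \<Rightarrow> real) \<Rightarrow> real \<Rightarrow> real" where
  "nrm_y \<phi> t = - deriv (prof_r \<phi>) t / prof_speed \<phi> t"

text \<open>Euclidean principal curvatures of the rotation hypersurface w.r.t. that normal:
  meridian curvature (multiplicity 1) and parallel curvature (multiplicity n-1).\<close>
definition eucl_kappa_m :: "(real \<Rightarrow> real) \<Rightarrow> real \<Rightarrow> real" where
  "eucl_kappa_m \<phi> t =
     (deriv (prof_r \<phi>) t * deriv (deriv (prof_y \<phi>)) t
      - deriv (prof_y \<phi>) t * deriv (deriv (prof_r \<phi>)) t) / prof_speed \<phi> t ^ 3"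

definition eucl_kappa_p :: "(real \<Rightarrow> real) \<Rightarrow> real \<Rightarrow> real" where
  "eucl_kappa_p \<phi> t = nrm_r \<phi> t / prof_r \<phi> t"

text \<open>Hyperbolic principal curvatures (conformal change g = y^(-2) g_E):
  kappa_hyp = y * kappa_eucl - N_y.\<close>
definition hyp_kappa_m :: "(real \<Rightarrow> real) \<Rightarrow> real \<Rightarrow> real" where
  "hyp_kappa_m \<phi> t = prof_y \<phi> t * eucl_kappa_m \<phi> t - nrm_y \<phi> t"

definition hyp_kappa_p :: "(real \<Rightarrow> real) \<Rightarrow> real \<Rightarrow> real" where
  "hyp_kappa_p \<phi> t = prof_y \<phi> t * eucl_kappa_p \<phi> t - nrm_y \<phi> t"

definition sff_sq :: "nat \<Rightarrow> (real \<Rightarrow> real) \<Rightarrow> real \<Rightarrow> real" where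
  "sff_sq n \<phi> t = (hyp_kappa_m \<phi> t)\<^sup>2 + real (n - 1) * (hyp_kappa_p \<phi> t)\<^sup>2"

definition potV :: "nat \<Rightarrow> (real \<Rightarrow> real) \<Rightarrow> real \<Rightarrow> real" where
  "potV n \<phi> t = sff_sq n \<phi> t - real n"

end

theory Submission
  imports Defs
begin

lemma gronwall0:
  fixes E E' :: "real \<Rightarrow> real"
  assumes d: "\<And>t. (E has_real_derivative E' t) (at t)"
    and b: "\<And>t. \<bar>E' t\<bar> \<le> M * E t" and nn: "\<And>t. E t \<ge> 0" and z: "E t0 = 0"
  shows "E t = 0"
proof (cases "t0 \<le> t")
  case True
  define G where "G s = E s * exp (- M * s)" for s
  have "G t \<le> G t0"
  proof (rule DERIV_nonpos_imp_nonincreasing[OF True])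
    fix x assume "t0 \<le> x" "x \<le> t"
    have "(G has_real_derivative (E' x * exp (- M * x) + E x * (exp (- M * x) * (- M)))) (at x)"
      unfolding G_def[abs_def]
      by (auto intro!: derivative_eq_intros d)
    moreover have "E' x * exp (- M * x) + E x * (exp (- M * x) * (- M)) \<le> 0"
    proof -
      have "E' x \<le> M * E x" using b[of x] by linarith
      then have "(E' x - M * E x) * exp (- M * x) \<le> 0"
        by (simp add: mult_nonpos_nonneg)
      then show ?thesis by (simp add: algebra_simps)
    qed
    ultimately show "\<exists>y. DERIV G x :> y \<and> y \<le> 0" by blast
  qed
  then have "E t * exp (- M * t) \<le> 0" using z by (simp add: G_def)
  then have "E t \<le> 0" by (simp add: mult_le_0_iff)
  then show ?thesis using nn[of t] by linarith
next
  case False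
  then have le: "t \<le> t0" by simp
  define G where "G s = E s * exp (M * s)" for s
  have "G t \<le> G t0"
  proof (rule DERIV_nonneg_imp_nondecreasing[OF le])
    fix x assume "t \<le> x" "x \<le> t0"
    have "(G has_real_derivative (E' x * exp (M * x) + E x * (exp (M * x) * M))) (at x)"
      unfolding G_def[abs_def]
      by (auto intro!: derivative_eq_intros d)
    moreover have "E' x * exp (M * x) + E x * (exp (M * x) * M) \<ge> 0"
    proof -
      have "- M * E x \<le> E' x" using b[of x] by linarith
      then have "(E' x + M * E x) * exp (M * x) \<ge> 0"
        by simp
      then show ?thesis by (simp add: algebra_simps)
    qed
    ultimately show "\<exists>y. DERIV G x :> y \<and> y \<ge> 0" by blast
  qed
  then have "E t * exp (M * t) \<le> 0" using z by (simp add: G_def)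
  then have "E t \<le> 0" by (simp add: mult_le_0_iff)
  then show ?thesis using nn[of t] by linarith
qed

lemma deriv_lip:
  fixes f f' :: "real \<Rightarrow> real"
  assumes d: "\<And>z. z \<in> {c..d} \<Longrightarrow> (f has_real_derivative f' z) (at z)"
    and cont: "continuous_on {c..d} f'"
  obtains L where "\<And>x y. x \<in> {c..d} \<Longrightarrow> y \<in> {c..d} \<Longrightarrow> \<bar>f x - f y\<bar> \<le> L * \<bar>x - y\<bar>"
proof (cases "c \<le> d")
  case False
  then show ?thesis using that[of 0] by auto
next
  case True
  have "continuous_on {c..d} (\<lambda>z. \<bar>f' z\<bar>)" using cont by (intro continuous_intros)
  then obtain z0 where z0: "z0 \<in> {c..d}" "\<And>y. y \<in> {c..d} \<Longrightarrow> \<bar>f' y\<bar> \<le> \<bar>f' z0\<bar>"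
    using continuous_attains_sup[of "{c..d}" "\<lambda>z. \<bar>f' z\<bar>"] True by auto
  have key: "\<bar>f x - f y\<bar> \<le> \<bar>f' z0\<bar> * \<bar>x - y\<bar>" if "x \<in> {c..d}" "y \<in> {c..d}" "x < y" for x y
  proof -
    have "\<exists>z. x < z \<and> z < y \<and> f y - f x = (y - x) * f' z"
    proof (rule MVT2)
      fix w assume "x \<le> w" "w \<le> y"
      then have "w \<in> {c..d}" using that by auto
      then show "DERIV f w :> f' w" by (rule d)
    qed (rule that(3))
    then obtain z where z: "x < z" "z < y" "f y - f x = (y - x) * f' z" by blast
    have "z \<in> {c..d}" using z that by auto
    then have "\<bar>f' z\<bar> \<le> \<bar>f' z0\<bar>" by (rule z0(2))
    then have "\<bar>y - x\<bar> * \<bar>f' z\<bar> \<le> \<bar>y - x\<bar> * \<bar>f' z0\<bar>" by (intro mult_left_mono) auto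
    moreover have "\<bar>f x - f y\<bar> = \<bar>y - x\<bar> * \<bar>f' z\<bar>"
      using z(3) by (metis abs_minus_commute abs_mult)
    ultimately show ?thesis by (simp add: abs_minus_commute mult.commute)
  qed
  show ?thesis
  proof (rule that[of "\<bar>f' z0\<bar>"])
    fix x y assume xy: "x \<in> {c..d}" "y \<in> {c..d}"
    consider "x < y" | "x = y" | "y < x" by linarith
    then show "\<bar>f x - f y\<bar> \<le> \<bar>f' z0\<bar> * \<bar>x - y\<bar>"
    proof cases
      case 1 then show ?thesis using key xy by blast
    next
      case 2 then show ?thesis by simp
    next
      case 3 then show ?thesis using key[of y x] xy by (simp add: abs_minus_commute)
    qed
  qed
qed

lemma ode_uniq:
  fixes f k x y u v :: "real \<Rightarrow> real"
  assumes dx: "\<And>t. (x has_real_derivative f (x t) * u t) (at t)"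
    and du: "\<And>t. (u has_real_derivative k (x t)) (at t)"
    and dy: "\<And>t. (y has_real_derivative f (y t) * v t) (at t)"
    and dv: "\<And>t. (v has_real_derivative k (y t)) (at t)"
    and xr: "\<And>t. x t \<in> {c..d}" and yr: "\<And>t. y t \<in> {c..d}"
    and vb: "\<And>t. \<bar>v t\<bar> \<le> Cv"
    and fb: "\<And>z. z \<in> {c..d} \<Longrightarrow> \<bar>f z\<bar> \<le> Fb"
    and fl: "\<And>p q. p \<in> {c..d} \<Longrightarrow> q \<in> {c..d} \<Longrightarrow> \<bar>f p - f q\<bar> \<le> Lf * \<bar>p - q\<bar>"
    and kl: "\<And>p q. p \<in> {c..d} \<Longrightarrow> q \<in> {c..d} \<Longrightarrow> \<bar>k p - k q\<bar> \<le> Lk * \<bar>p - q\<bar>"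
    and pos: "Lf \<ge> 0" "Lk \<ge> 0" "Fb \<ge> 0" "Cv \<ge> 0"
    and i1: "x t0 = y t0" and i2: "u t0 = v t0"
  shows "x t = y t \<and> u t = v t"
proof -
  define E where "E s = (x s - y s)\<^sup>2 + (u s - v s)\<^sup>2" for s
  define E' where "E' s = 2 * (x s - y s) * (f (x s) * u s - f (y s) * v s)
      + 2 * (u s - v s) * (k (x s) - k (y s))" for s
  define M where "M = Fb + Lk + 2 * Cv * Lf"
  have dE: "(E has_real_derivative E' s) (at s)" for s
    unfolding E_def[abs_def] E'_def
    by (rule derivative_eq_intros dx du dy dv refl)+ (simp add: algebra_simps)
  have bE: "\<bar>E' s\<bar> \<le> M * E s" for s
  proof -
    define X where "X = x s - y s"
    define Y where "Y = u s - v s"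
    have A: "f (x s) * u s - f (y s) * v s = f (x s) * Y + (f (x s) - f (y s)) * v s"
      by (simp add: Y_def algebra_simps)
    have h1: "\<bar>f (x s)\<bar> \<le> Fb" using fb xr by blast
    have h2: "\<bar>f (x s) - f (y s)\<bar> \<le> Lf * \<bar>X\<bar>" using fl xr yr X_def by blast
    have h3: "\<bar>k (x s) - k (y s)\<bar> \<le> Lk * \<bar>X\<bar>" using kl xr yr X_def by blast
    have h4: "\<bar>v s\<bar> \<le> Cv" by (rule vb)
    have "\<bar>E' s\<bar> \<le> 2 * \<bar>X\<bar> * (\<bar>f (x s)\<bar> * \<bar>Y\<bar> + \<bar>f (x s) - f (y s)\<bar> * \<bar>v s\<bar>)
        + 2 * \<bar>Y\<bar> * \<bar>k (x s) - k (y s)\<bar>"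
      unfolding E'_def A X_def[symmetric] Y_def[symmetric]
      by (simp add: abs_mult abs_triangle_ineq order_trans[OF abs_triangle_ineq] add_mono mult_left_mono)
    also have "\<dots> \<le> 2 * \<bar>X\<bar> * (Fb * \<bar>Y\<bar> + (Lf * \<bar>X\<bar>) * Cv) + 2 * \<bar>Y\<bar> * (Lk * \<bar>X\<bar>)"
      by (intro add_mono mult_left_mono mult_mono h1 h2 h3 h4) (auto simp: pos)
    also have "\<dots> = (Fb + Lk) * (2 * \<bar>X\<bar> * \<bar>Y\<bar>) + 2 * Cv * Lf * X\<^sup>2"
      by (simp add: algebra_simps power2_eq_square abs_mult_self_eq)
    also have "\<dots> \<le> (Fb + Lk) * (X\<^sup>2 + Y\<^sup>2) + 2 * Cv * Lf * (X\<^sup>2 + Y\<^sup>2)"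
    proof (intro add_mono mult_left_mono)
      have "0 \<le> (\<bar>X\<bar> - \<bar>Y\<bar>)\<^sup>2" by simp
      then show "2 * \<bar>X\<bar> * \<bar>Y\<bar> \<le> X\<^sup>2 + Y\<^sup>2" by (simp add: power2_eq_square algebra_simps abs_mult_self_eq)
    qed (auto simp: pos)
    also have "\<dots> = M * E s" by (simp add: M_def E_def X_def Y_def algebra_simps)
    finally show ?thesis .
  qed
  have "E t = 0"
    using gronwall0[of E E' M t0 t] dE bE by (auto simp: E_def i1 i2)
  then show ?thesis unfolding E_def
    by (simp add: add_nonneg_eq_0_iff)
qed

definition Wf :: "nat \<Rightarrow> real \<Rightarrow> real \<Rightarrow> real \<Rightarrow> real" where
  "Wf n \<mu> H y = \<mu> / y ^ (n - 1) + H * y"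
definition W1f :: "nat \<Rightarrow> real \<Rightarrow> real \<Rightarrow> real \<Rightarrow> real" where
  "W1f n \<mu> H y = H - real (n - 1) * \<mu> / y ^ n"
definition W2f :: "nat \<Rightarrow> real \<Rightarrow> real \<Rightarrow> real \<Rightarrow> real" where
  "W2f n \<mu> H y = real (n - 1) * real n * \<mu> / y ^ (n + 1)"
definition Phf :: "nat \<Rightarrow> real \<Rightarrow> real \<Rightarrow> real \<Rightarrow> real" where
  "Phf n \<mu> H y = y - Wf n \<mu> H y * W1f n \<mu> H y"
definition Ph1f :: "nat \<Rightarrow> real \<Rightarrow> real \<Rightarrow> real \<Rightarrow> real" where
  "Ph1f n \<mu> H y = 1 - (W1f n \<mu> H y)\<^sup>2 - Wf n \<mu> H y * W2f n \<mu> H y"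
definition ff :: "nat \<Rightarrow> real \<Rightarrow> real \<Rightarrow> real \<Rightarrow> real" where
  "ff n \<mu> H y = (1 + y\<^sup>2) / Wf n \<mu> H y"
definition ff1 :: "nat \<Rightarrow> real \<Rightarrow> real \<Rightarrow> real \<Rightarrow> real" where
  "ff1 n \<mu> H y = (2 * y * Wf n \<mu> H y - (1 + y\<^sup>2) * W1f n \<mu> H y) / (Wf n \<mu> H y)\<^sup>2"
definition kf :: "nat \<Rightarrow> real \<Rightarrow> real \<Rightarrow> real \<Rightarrow> real" where
  "kf n \<mu> H y = (1 + y\<^sup>2) * Phf n \<mu> H y / Wf n \<mu> H y"
definition kf1 :: "nat \<Rightarrow> real \<Rightarrow> real \<Rightarrow> real \<Rightarrow> real" where
  "kf1 n \<mu> H y = ((2 * y * Phf n \<mu> H y + (1 + y\<^sup>2) * Ph1f n \<mu> H y) * Wf n \<mu> H y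
      - (1 + y\<^sup>2) * Phf n \<mu> H y * W1f n \<mu> H y) / (Wf n \<mu> H y)\<^sup>2"
definition qf :: "nat \<Rightarrow> real \<Rightarrow> real \<Rightarrow> real \<Rightarrow> real" where
  "qf n \<mu> H y = (1 - H\<^sup>2) + real (n - 1) * \<mu>\<^sup>2 / y ^ (2 * n) + real (n - 2) * \<mu> * H / y ^ n"

context
  fixes n :: nat and \<mu> H :: real
  assumes n2: "n \<ge> 2" and mu: "\<mu> > 0" and Hp: "H > 0"
begin

lemma Wf_pos: "y > 0 \<Longrightarrow> Wf n \<mu> H y > 0"
  unfolding Wf_def using mu Hp by (intro add_pos_pos divide_pos_pos) auto

lemma pow_aux: "(y::real) \<noteq> 0 \<Longrightarrow> y ^ (n - 1) * y = y ^ n"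
  using n2 by (metis Suc_diff_1 less_le_trans pos2 power_Suc2)

lemma DERIV_Wf: "y > 0 \<Longrightarrow> (Wf n \<mu> H has_real_derivative W1f n \<mu> H y) (at y)"
proof -
  assume y: "y > 0"
  have "((\<lambda>y. \<mu> / y ^ (n - 1) + H * y) has_real_derivative
      (- (\<mu> * (real (n - 1) * y ^ (n - 1 - 1))) / (y ^ (n - 1) * y ^ (n - 1)) + H)) (at y)"
    using y by (auto intro!: derivative_eq_intros)
  moreover have "- (\<mu> * (real (n - 1) * y ^ (n - 1 - 1))) / (y ^ (n - 1) * y ^ (n - 1)) + H = W1f n \<mu> H y"
  proof -
    obtain j where j: "n = Suc (Suc j)" using n2 by (metis add_2_eq_Suc le_iff_add)
    show ?thesis using y unfolding W1f_def j by (simp add: field_simps)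
  qed
  ultimately show ?thesis unfolding Wf_def[abs_def] by simp
qed

lemma DERIV_W1f: "y > 0 \<Longrightarrow> (W1f n \<mu> H has_real_derivative W2f n \<mu> H y) (at y)"
proof -
  assume y: "y > 0"
  have "((\<lambda>y. H - real (n - 1) * \<mu> / y ^ n) has_real_derivative
      (- (- (real (n - 1) * \<mu> * (real n * y ^ (n - 1))) / (y ^ n * y ^ n)))) (at y)"
    using y by (auto intro!: derivative_eq_intros)
  moreover have "- (- (real (n - 1) * \<mu> * (real n * y ^ (n - 1))) / (y ^ n * y ^ n)) = W2f n \<mu> H y"
  proof -
    obtain j where j: "n = Suc (Suc j)" using n2 by (metis add_2_eq_Suc le_iff_add)
    show ?thesis using y unfolding W2f_def j by (simp add: field_simps)
  qed
  ultimately show ?thesis unfolding W1f_def[abs_def] by simp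
qed


lemma DERIV_Phf: "y > 0 \<Longrightarrow> (Phf n \<mu> H has_real_derivative Ph1f n \<mu> H y) (at y)"
proof -
  assume y: "y > 0"
  have "((\<lambda>y. y - Wf n \<mu> H y * W1f n \<mu> H y) has_real_derivative
      (1 - (W1f n \<mu> H y * W1f n \<mu> H y + Wf n \<mu> H y * W2f n \<mu> H y))) (at y)"
    by (rule derivative_eq_intros DERIV_Wf DERIV_W1f y refl)+ (simp add: algebra_simps)
  then show ?thesis unfolding Phf_def[abs_def] Ph1f_def by (simp add: power2_eq_square algebra_simps)
qed

lemma DERIV_ff: "y > 0 \<Longrightarrow> (ff n \<mu> H has_real_derivative ff1 n \<mu> H y) (at y)"
proof -
  assume y: "y > 0"
  have W: "Wf n \<mu> H y > 0" using Wf_pos y by blast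
  have "((\<lambda>y. (1 + y\<^sup>2) / Wf n \<mu> H y) has_real_derivative
      ((0 + 2 * y ^ 1 * 1) * Wf n \<mu> H y - (1 + y\<^sup>2) * W1f n \<mu> H y) / (Wf n \<mu> H y * Wf n \<mu> H y)) (at y)"
    using W y by (intro derivative_eq_intros DERIV_Wf refl) (auto intro: DERIV_Wf)
  then show ?thesis unfolding ff_def[abs_def] ff1_def by (simp add: power2_eq_square)
qed

lemma DERIV_kf: "y > 0 \<Longrightarrow> (kf n \<mu> H has_real_derivative kf1 n \<mu> H y) (at y)"
proof -
  assume y: "y > 0"
  have W: "Wf n \<mu> H y > 0" using Wf_pos y by blast
  have "((\<lambda>y. (1 + y\<^sup>2) * Phf n \<mu> H y / Wf n \<mu> H y) has_real_derivative
      (((0 + 2 * y ^ 1 * 1) * Phf n \<mu> H y + (1 + y\<^sup>2) * Ph1f n \<mu> H y) * Wf n \<mu> H y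
        - (1 + y\<^sup>2) * Phf n \<mu> H y * W1f n \<mu> H y) / (Wf n \<mu> H y * Wf n \<mu> H y)) (at y)"
    using W y by (intro derivative_eq_intros DERIV_Wf DERIV_Phf refl) (auto intro: DERIV_Wf DERIV_Phf)
  then show ?thesis unfolding kf_def[abs_def] kf1_def by (simp add: power2_eq_square)
qed

lemma cont_Wf: "continuous_on {0<..} (Wf n \<mu> H)"
  by (rule has_real_derivative_imp_continuous_on) (use DERIV_Wf in auto)
lemma cont_W1f: "continuous_on {0<..} (W1f n \<mu> H)"
  by (rule has_real_derivative_imp_continuous_on) (use DERIV_W1f in auto)
lemma cont_W2f: "continuous_on {0<..} (W2f n \<mu> H)"
  unfolding W2f_def by (intro continuous_intros) auto
lemma cont_Phf: "continuous_on {0<..} (Phf n \<mu> H)"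
  by (rule has_real_derivative_imp_continuous_on) (use DERIV_Phf in auto)
lemma cont_Ph1f: "continuous_on {0<..} (Ph1f n \<mu> H)"
  unfolding Ph1f_def[abs_def] by (intro continuous_intros cont_Wf cont_W1f cont_W2f)
lemma cont_ff1: "continuous_on {0<..} (ff1 n \<mu> H)"
  unfolding ff1_def[abs_def]
  by (intro continuous_intros cont_Wf cont_W1f) (use Wf_pos in force)
lemma cont_kf1: "continuous_on {0<..} (kf1 n \<mu> H)"
  unfolding kf1_def[abs_def]
  by (intro continuous_intros cont_Wf cont_W1f cont_Phf cont_Ph1f) (use Wf_pos in force)
lemma cont_kf: "continuous_on {0<..} (kf n \<mu> H)"
  by (rule has_real_derivative_imp_continuous_on) (use DERIV_kf in auto)
lemma cont_ff: "continuous_on {0<..} (ff n \<mu> H)"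
  by (rule has_real_derivative_imp_continuous_on) (use DERIV_ff in auto)

lemma Phf_qf: "y > 0 \<Longrightarrow> Phf n \<mu> H y = y * qf n \<mu> H y"
proof -
  assume y: "y > 0"
  obtain j where j: "n = Suc (Suc j)" using n2 by (metis add_2_eq_Suc le_iff_add)
  have e: "y ^ (2 * n) = y ^ n * y ^ n" by (simp add: mult_2 power_add)
  show ?thesis using y unfolding Phf_def Wf_def W1f_def qf_def e unfolding j
    by (simp add: field_simps, simp add: power2_eq_square algebra_simps)
qed

lemma qf_strict: "0 < y1 \<Longrightarrow> y1 < y2 \<Longrightarrow> qf n \<mu> H y2 < qf n \<mu> H y1"
proof -
  assume y: "0 < y1" "y1 < y2"
  have m: "real (n - 1) > 0" using n2 by simp
  have a: "\<mu>\<^sup>2 / y2 ^ (2 * n) < \<mu>\<^sup>2 / y1 ^ (2 * n)"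
    using y mu n2 by (intro divide_strict_left_mono power_strict_mono mult_pos_pos) auto
  have b: "\<mu> * H / y2 ^ n \<le> \<mu> * H / y1 ^ n"
    using y mu Hp n2 by (intro divide_left_mono power_mono mult_pos_pos) auto
  have "real (n - 1) * \<mu>\<^sup>2 / y2 ^ (2 * n) < real (n - 1) * \<mu>\<^sup>2 / y1 ^ (2 * n)"
    using mult_strict_left_mono[OF a m] by (simp only: times_divide_eq_right)
  moreover have "real (n - 2) * \<mu> * H / y2 ^ n \<le> real (n - 2) * \<mu> * H / y1 ^ n"
    using mult_left_mono[OF b, of "real (n - 2)"] by (simp only: times_divide_eq_right mult.assoc of_nat_0_le_iff)
  ultimately show ?thesis unfolding qf_def by linarith
qed

lemma W_identity: "y > 0 \<Longrightarrow>
    real (n - 1) * Wf n \<mu> H y = real (n - 1) * y * W1f n \<mu> H y + y\<^sup>2 * W2f n \<mu> H y"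
proof -
  assume y: "y > 0"
  obtain j where j: "n = Suc (Suc j)" using n2 by (metis add_2_eq_Suc le_iff_add)
  show ?thesis using y unfolding Wf_def W1f_def W2f_def j
    by (simp add: field_simps power2_eq_square)
qed

end

locale L35 =
  fixes n :: nat and H \<mu> \<tau> :: real and \<phi> a :: "real \<Rightarrow> real"
  assumes n2: "n \<ge> 2" and H1: "H > 1" and mu: "\<mu> > 0"
    and smooth: "\<And>k t. (deriv ^^ k) \<phi> differentiable (at t)"
    and range: "\<And>t. 0 < \<phi> t \<and> \<phi> t < pi / 2"
    and ode: "\<And>t. \<mu> = tan (\<phi> t) ^ (n - 1) / (cos (\<phi> t) * sqrt (1 + (deriv \<phi> t)\<^sup>2))
                     - H * tan (\<phi> t) ^ n"
    and nonconst: "\<exists>s t. \<phi> s \<noteq> \<phi> t"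
    and min0: "\<And>t. \<phi> 0 \<le> \<phi> t"
    and tau_pos: "\<tau> > 0"
    and periodic: "\<And>t. \<phi> (t + \<tau>) = \<phi> t"
    and tau_min: "\<And>T. 0 < T \<Longrightarrow> T < \<tau> \<Longrightarrow> \<exists>t. \<phi> (t + T) \<noteq> \<phi> t"
    and a_def: "\<And>t. a t = deriv \<phi> t / (cos (\<phi> t) * sqrt (1 + (deriv \<phi> t)\<^sup>2))"
begin

lemma Hp: "H > 0" using H1 by simp

abbreviation "W \<equiv> Wf n \<mu> H"
abbreviation "W1 \<equiv> W1f n \<mu> H"
abbreviation "W2 \<equiv> W2f n \<mu> H"
abbreviation "Ph \<equiv> Phf n \<mu> H"
abbreviation "Ph1 \<equiv> Ph1f n \<mu> H"
abbreviation "fF \<equiv> ff n \<mu> H"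
abbreviation "kF \<equiv> kf n \<mu> H"
abbreviation "p1 \<equiv> deriv \<phi>"
abbreviation "p2 \<equiv> deriv (deriv \<phi>)"

definition TT :: "real \<Rightarrow> real" where "TT t = tan (\<phi> t)"

lemmas W_pos = Wf_pos[OF n2 mu Hp]
lemmas pow_n = pow_aux[OF n2 mu Hp]
lemmas dW = DERIV_Wf[OF n2 mu Hp]
lemmas dW1 = DERIV_W1f[OF n2 mu Hp]
lemmas dPh = DERIV_Phf[OF n2 mu Hp]
lemmas dff = DERIV_ff[OF n2 mu Hp]
lemmas dkf = DERIV_kf[OF n2 mu Hp]

lemma dphi: "(\<phi> has_real_derivative p1 t) (at t)"
  using smooth[of 0 t] by (simp add: DERIV_deriv_iff_real_differentiable)
lemma dp1: "(p1 has_real_derivative p2 t) (at t)"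
  using smooth[of 1 t] by (simp add: DERIV_deriv_iff_real_differentiable)
lemma dp2: "(p2 has_real_derivative deriv p2 t) (at t)"
  using smooth[of "Suc (Suc 0)" t] by (simp add: DERIV_deriv_iff_real_differentiable)
lemma cont_phi: "isCont \<phi> t" using dphi DERIV_isCont by blast
lemma cont_p1: "isCont p1 t" using dp1 DERIV_isCont by blast
lemma cont_p2: "isCont p2 t" using dp2 DERIV_isCont by blast

lemma cos_pos: "cos (\<phi> t) > 0"
  using range[of t] by (intro cos_gt_zero_pi) auto
lemma sin_pos: "sin (\<phi> t) > 0"
  using range[of t] by (intro sin_gt_zero) auto
lemma TT_pos: "TT t > 0"
  unfolding TT_def tan_def using cos_pos sin_pos by simp

lemma one_TT: "1 + (TT t)\<^sup>2 = 1 / (cos (\<phi> t))\<^sup>2"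
proof -
  have c: "cos (\<phi> t) \<noteq> 0" using cos_pos[of t] by simp
  show ?thesis unfolding TT_def tan_def using c sin_cos_squared_add[of "\<phi> t"]
    by (simp add: field_simps power2_eq_square)
qed

lemma Wid: "1 / (cos (\<phi> t) * sqrt (1 + (p1 t)\<^sup>2)) = W (TT t)"
proof -
  define X where "X = 1 / (cos (\<phi> t) * sqrt (1 + (p1 t)\<^sup>2))"
  define y where "y = TT t"
  have y: "y > 0" using TT_pos y_def by simp
  have "\<mu> = y ^ (n - 1) * X - H * y ^ n"
    using ode[of t] unfolding X_def y_def TT_def by simp
  also have "y ^ n = y ^ (n - 1) * y" using pow_n[of y] y by simp
  finally have "\<mu> = y ^ (n - 1) * (X - H * y)" by (simp add: algebra_simps)
  then have "X - H * y = \<mu> / y ^ (n - 1)" using y by (simp add: field_simps)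
  then show ?thesis unfolding X_def[symmetric] y_def[symmetric] Wf_def by simp
qed

lemma a_eq: "a t = p1 t * W (TT t)"
  using a_def[of t] Wid[of t] by (simp add: divide_inverse)

lemma a_fun: "a = (\<lambda>t. p1 t * W (TT t))"
  using a_eq by auto

lemma p1_sq: "(p1 t)\<^sup>2 = (1 + (TT t)\<^sup>2) / (W (TT t))\<^sup>2 - 1"
proof -
  define s where "s = sqrt (1 + (p1 t)\<^sup>2)"
  have s: "s > 0" unfolding s_def by (simp add: add_pos_nonneg)
  have s2: "s\<^sup>2 = 1 + (p1 t)\<^sup>2" unfolding s_def by (simp add: add_nonneg_nonneg)
  have c: "cos (\<phi> t) > 0" by (rule cos_pos)
  have w: "W (TT t) > 0" using W_pos TT_pos by blast
  have "s = 1 / (cos (\<phi> t) * W (TT t))"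
    using Wid[of t] s c w unfolding s_def[symmetric] by (simp add: field_simps)
  then have "s\<^sup>2 = (1 / (cos (\<phi> t))\<^sup>2) / (W (TT t))\<^sup>2" by (simp add: power_divide power_mult_distrib)
  then show ?thesis using s2 one_TT[of t] by simp
qed

lemma a_sq: "(a t)\<^sup>2 = 1 + (TT t)\<^sup>2 - (W (TT t))\<^sup>2"
proof -
  have w: "W (TT t) > 0" using W_pos TT_pos by blast
  show ?thesis unfolding a_eq power_mult_distrib p1_sq using w by (simp add: field_simps)
qed

lemma dTT: "(TT has_real_derivative (1 + (TT t)\<^sup>2) * p1 t) (at t)"
proof -
  have c: "cos (\<phi> t) \<noteq> 0" using cos_pos[of t] by simp
  have "((\<lambda>t. tan (\<phi> t)) has_real_derivative inverse ((cos (\<phi> t))\<^sup>2) * p1 t) (at t)"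
    by (rule DERIV_chain2[OF DERIV_tan[OF c] dphi])
  then show ?thesis unfolding TT_def[abs_def] using one_TT[of t] unfolding TT_def
    by (simp add: divide_inverse)
qed

lemma dTT_f: "(TT has_real_derivative fF (TT t) * a t) (at t)"
proof -
  have w: "W (TT t) > 0" using W_pos TT_pos by blast
  have "fF (TT t) * a t = (1 + (TT t)\<^sup>2) * p1 t" unfolding ff_def a_eq using w by simp
  then show ?thesis using dTT by simp
qed

lemma dWT: "((\<lambda>t. W (TT t)) has_real_derivative W1 (TT t) * ((1 + (TT t)\<^sup>2) * p1 t)) (at t)"
  by (rule DERIV_chain2[OF dW[OF TT_pos] dTT])

definition A1 :: "real \<Rightarrow> real" where
  "A1 t = p2 t * W (TT t) + p1 t * (W1 (TT t) * ((1 + (TT t)\<^sup>2) * p1 t))"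

lemma da: "(a has_real_derivative A1 t) (at t)"
proof -
  have "((\<lambda>t. p1 t * W (TT t)) has_real_derivative A1 t) (at t)"
    unfolding A1_def
    by (rule derivative_eq_intros dp1 dWT refl)+ (simp add: algebra_simps)
  then show ?thesis using a_fun by simp
qed

lemma deriv_a: "deriv a t = A1 t" using da by (rule DERIV_imp_deriv)

lemma cont_A1: "isCont A1 t"
proof -
  have "continuous_on {0<..} W" by (rule cont_Wf[OF n2 mu Hp])
  then have cW: "isCont W (TT t)" using TT_pos continuous_on_eq_continuous_at[of "{0<..}" W] by auto
  have "continuous_on {0<..} W1" by (rule cont_W1f[OF n2 mu Hp])
  then have cW1: "isCont W1 (TT t)" using TT_pos continuous_on_eq_continuous_at[of "{0<..}" W1] by auto
  have cT: "isCont TT t" using dTT DERIV_isCont by blast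
  show ?thesis unfolding A1_def[abs_def]
    by (intro continuous_intros cont_p1 cont_p2 isCont_o2[OF cT cW] isCont_o2[OF cT cW1] cT)
qed

lemma aa': "a t * (deriv a t - kF (TT t)) = 0"
proof -
  define y where "y = TT t"
  have w: "W y > 0" using W_pos TT_pos y_def by blast
  have d1: "((\<lambda>t. (a t)\<^sup>2) has_real_derivative 2 * a t * A1 t) (at t)"
    by (rule derivative_eq_intros da refl)+ simp
  have d2: "((\<lambda>t. 1 + (TT t)\<^sup>2 - (W (TT t))\<^sup>2) has_real_derivative
       (2 * TT t * ((1 + (TT t)\<^sup>2) * p1 t) - 2 * W (TT t) * (W1 (TT t) * ((1 + (TT t)\<^sup>2) * p1 t)))) (at t)"
    by (rule derivative_eq_intros dTT dWT refl)+ simp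
  have fe: "(\<lambda>t. (a t)\<^sup>2) = (\<lambda>t. 1 + (TT t)\<^sup>2 - (W (TT t))\<^sup>2)" using a_sq by auto
  have "2 * a t * A1 t = 2 * TT t * ((1 + (TT t)\<^sup>2) * p1 t) - 2 * W (TT t) * (W1 (TT t) * ((1 + (TT t)\<^sup>2) * p1 t))"
    using d1 d2 unfolding fe by (rule DERIV_unique)
  also have "\<dots> = 2 * p1 t * (1 + y\<^sup>2) * Ph y"
    unfolding Phf_def y_def by (simp add: algebra_simps)
  also have "\<dots> = 2 * a t * kF y"
  proof -
    have "kF y * W y = (1 + y\<^sup>2) * Ph y" unfolding kf_def using w by simp
    then show ?thesis unfolding a_eq y_def[symmetric] by (metis mult.commute mult.left_commute)
  qed
  finally show ?thesis unfolding deriv_a y_def by (simp add: algebra_simps)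
qed


lemma cont_a: "isCont a t" using da DERIV_isCont by blast
lemma cont_TT: "isCont TT t" using dTT DERIV_isCont by blast
lemma cont_kT: "isCont (\<lambda>t. kF (TT t)) t"
proof -
  have "continuous_on {0<..} kF" by (rule cont_kf[OF n2 mu Hp])
  then have "isCont kF (TT t)" using TT_pos continuous_on_eq_continuous_at[of "{0<..}" kF] by auto
  then show ?thesis using isCont_o2[OF cont_TT] by blast
qed

lemma per_nat: "\<phi> (t + real k * \<tau>) = \<phi> t"
proof (induction k arbitrary: t)
  case 0 then show ?case by simp
next
  case (Suc k)
  have "\<phi> (t + real (Suc k) * \<tau>) = \<phi> ((t + real k * \<tau>) + \<tau>)" by (simp add: algebra_simps)
  also have "\<dots> = \<phi> (t + real k * \<tau>)" by (rule periodic)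
  finally show ?case using Suc by simp
qed

lemma per_int: "\<phi> (t + real_of_int k * \<tau>) = \<phi> t"
proof (cases "k \<ge> 0")
  case True
  then have kk: "real_of_int k = real (nat k)" by simp
  show ?thesis unfolding kk by (rule per_nat)
next
  case False
  define j where "j = nat (- k)"
  have k: "real_of_int k = - real j" unfolding j_def using False by simp
  have "\<phi> (t + real_of_int k * \<tau>) = \<phi> ((t + real_of_int k * \<tau>) + real j * \<tau>)" by (rule per_nat[symmetric])
  also have "(t + real_of_int k * \<tau>) + real j * \<tau> = t" unfolding k by (simp add: algebra_simps)
  finally show ?thesis .
qed

lemma tan_inj: "TT s = TT t \<Longrightarrow> \<phi> s = \<phi> t"
proof -
  assume "TT s = TT t"
  then have "arctan (tan (\<phi> s)) = arctan (tan (\<phi> t))" unfolding TT_def by simp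
  moreover have "arctan (tan (\<phi> s)) = \<phi> s" using range[of s] pi_gt_zero by (intro arctan_tan) linarith+
  moreover have "arctan (tan (\<phi> t)) = \<phi> t" using range[of t] pi_gt_zero by (intro arctan_tan) linarith+
  ultimately show ?thesis by simp
qed

lemma shift_p1: assumes P: "\<And>t. \<phi> (t + P) = \<phi> t" shows "p1 (t + P) = p1 t"
proof -
  have "((\<lambda>s. \<phi> (s + P)) has_real_derivative p1 (t + P) * 1) (at t)"
    by (rule DERIV_chain2[OF dphi]) (auto intro!: derivative_eq_intros)
  moreover have "(\<lambda>s. \<phi> (s + P)) = \<phi>" using P by auto
  ultimately have "(\<phi> has_real_derivative p1 (t + P) * 1) (at t)" by simp
  from DERIV_unique[OF this dphi] show ?thesis by simp
qed

lemma shift_a: assumes P: "\<And>t. \<phi> (t + P) = \<phi> t" shows "a (t + P) = a t" "TT (t + P) = TT t"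
  using shift_p1[OF P] P unfolding a_eq TT_def by auto

lemma exists_ne: "\<exists>s \<ge> t0. \<phi> s \<noteq> \<phi> t0"
proof (rule ccontr)
  assume "\<not> ?thesis"
  then have c: "\<And>s. s \<ge> t0 \<Longrightarrow> \<phi> s = \<phi> t0" by blast
  have all: "\<phi> x = \<phi> t0" for x
  proof -
    define k where "k = nat (ceiling ((t0 - x) / \<tau>))"
    have "(t0 - x) / \<tau> \<le> real k" unfolding k_def by (rule real_nat_ceiling_ge)
    then have "t0 - x \<le> real k * \<tau>" using tau_pos by (simp add: pos_divide_le_eq)
    then have "\<phi> (x + real k * \<tau>) = \<phi> t0" using c[of "x + real k * \<tau>"] by linarith
    moreover have "\<phi> (x + real k * \<tau>) = \<phi> x" by (rule per_nat)
    ultimately show ?thesis by simp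
  qed
  obtain s1 s2 where "\<phi> s1 \<noteq> \<phi> s2" using nonconst by blast
  then show False using all[of s1] all[of s2] by simp
qed

lemma U_local: assumes "A1 t \<noteq> kF (TT t)"
  shows "\<exists>\<delta>>0. \<forall>s. \<bar>s - t\<bar> < \<delta> \<longrightarrow> a s = 0 \<and> A1 s = 0 \<and> TT s = TT t"
proof -
  define U where "U = {t. A1 t \<noteq> kF (TT t)}"
  have oU: "open U" unfolding U_def
    by (rule open_Collect_neq) (use cont_A1 cont_kT in \<open>auto intro!: continuous_at_imp_continuous_on\<close>)
  have aU: "a s = 0" if "s \<in> U" for s using aa'[of s] that unfolding U_def deriv_a by simp
  have A1U: "A1 s = 0" if "s \<in> U" for s
  proof -
    have "((\<lambda>_. 0) has_real_derivative 0) (at s)" by simp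
    then have "(a has_real_derivative 0) (at s)"
      by (rule has_field_derivative_transform_within_open[OF _ oU that]) (use aU in auto)
    then show ?thesis using da DERIV_unique by blast
  qed
  obtain \<delta> where d: "\<delta> > 0" "ball t \<delta> \<subseteq> U" using oU assms unfolding U_def open_contains_ball by blast
  have "TT s = TT t" if "\<bar>s - t\<bar> < \<delta>" for s
  proof (rule DERIV_isconst3[of "t - \<delta>" "t + \<delta>" s t TT])
    show "t - \<delta> < t + \<delta>" using d by simp
    show "s \<in> {t - \<delta><..<t + \<delta>}" using that by auto
    show "t \<in> {t - \<delta><..<t + \<delta>}" using d by auto
    fix x assume "x \<in> {t - \<delta><..<t + \<delta>}"
    then have "x \<in> U" using d by (auto simp: dist_real_def)
    then show "DERIV TT x :> 0" using dTT_f[of x] aU by simp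
  qed
  moreover have "s \<in> U" if "\<bar>s - t\<bar> < \<delta>" for s using d that by (auto simp: dist_real_def)
  ultimately show ?thesis using d aU A1U by blast
qed

lemma flat: "deriv a t = kF (TT t)"
proof (rule ccontr)
  assume ne: "deriv a t \<noteq> kF (TT t)"
  define t0 where "t0 = t"
  define c0 where "c0 = TT t0"
  have ne0: "A1 t0 \<noteq> kF (TT t0)" using ne deriv_a t0_def by simp
  obtain d0 where "d0 > 0" "\<And>s. \<bar>s - t0\<bar> < d0 \<Longrightarrow> a s = 0 \<and> A1 s = 0 \<and> TT s = TT t0"
    using U_local[OF ne0] by metis
  then have A10: "A1 t0 = 0" and a0: "a t0 = 0" by auto
  then have kc0: "kF c0 \<noteq> 0" using ne0 c0_def by simp
  define P where "P = {t. TT t = c0 \<and> a t = 0 \<and> A1 t = 0}"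
  have cP: "closed P" unfolding P_def Collect_conj_eq
    by (intro closed_Int closed_Collect_eq continuous_intros)
       (use cont_TT cont_a cont_A1 in \<open>auto intro!: continuous_at_imp_continuous_on\<close>)
  define S where "S = {s. s \<ge> t0 \<and> s \<notin> P}"
  obtain s0 where s0: "s0 \<ge> t0" "\<phi> s0 \<noteq> \<phi> t0" using exists_ne by blast
  then have "TT s0 \<noteq> c0" using tan_inj c0_def by blast
  then have s0S: "s0 \<in> S" unfolding S_def P_def using s0 by auto
  then have Sne: "S \<noteq> {}" by auto
  have bS: "bdd_below S" unfolding S_def by (rule bdd_belowI[of _ t0]) auto
  define q where "q = Inf S"
  have qge: "q \<ge> t0" unfolding q_def using Sne by (intro cInf_greatest) (auto simp: S_def)
  have below: "x \<in> P" if "t0 \<le> x" "x < q" for x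
  proof (rule ccontr)
    assume "x \<notin> P"
    then have "x \<in> S" using that S_def by auto
    then have "q \<le> x" unfolding q_def using bS by (rule cInf_lower)
    then show False using that by simp
  qed
  have t0P: "t0 \<in> P" unfolding P_def using c0_def a0 A10 by simp
  have qP: "q \<in> P"
  proof (cases "q = t0")
    case True then show ?thesis using t0P by simp
  next
    case False
    then have qgt: "q > t0" using qge by simp
    show ?thesis
    proof (rule ccontr)
      assume "q \<notin> P"
      then have "q \<in> - P" by simp
      moreover have "open (- P)" using cP by (simp add: open_Compl)
      ultimately obtain e where e: "e > 0" "ball q e \<subseteq> - P" unfolding open_contains_ball by blast
      define x where "x = max t0 (q - e / 2)"
      have "x \<in> ball q e" unfolding x_def using e qgt by (auto simp: dist_real_def)
      moreover have "x \<in> P" using below[of x] unfolding x_def using e qgt by auto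
      ultimately show False using e by auto
    qed
  qed
  then have "A1 q \<noteq> kF (TT q)" using kc0 unfolding P_def by auto
  then obtain \<delta> where d: "\<delta> > 0" "\<And>s. \<bar>s - q\<bar> < \<delta> \<Longrightarrow> a s = 0 \<and> A1 s = 0 \<and> TT s = TT q"
    using U_local[of q] by metis
  have "Inf S < q + \<delta>" using d q_def by simp
  then obtain s where s: "s \<in> S" "s < q + \<delta>" using cInf_less_iff[OF Sne bS] by blast
  have "q \<le> s" unfolding q_def using s(1) bS by (rule cInf_lower)
  then have "s \<in> P" using d(2)[of s] s qP unfolding P_def by auto
  then show False using s S_def by auto
qed

end

context L35
begin

lemma da_k: "(a has_real_derivative kF (TT t)) (at t)"
  using da[of t] flat[of t] deriv_a[of t] by simp

lemma reduce: "\<exists>r k. r \<in> {0..\<tau>} \<and> t = r + real_of_int k * \<tau>"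
proof -
  define k where "k = floor (t / \<tau>)"
  define r where "r = t - real_of_int k * \<tau>"
  have "real_of_int k \<le> t / \<tau>" "t / \<tau> < real_of_int k + 1" unfolding k_def by linarith+
  then have "real_of_int k * \<tau> \<le> t" "t < (real_of_int k + 1) * \<tau>"
    using tau_pos by (simp_all add: pos_le_divide_eq pos_divide_less_eq)
  then have "r \<in> {0..\<tau>}" unfolding r_def by (auto simp: algebra_simps)
  then show ?thesis by (intro exI[of _ r] exI[of _ k]) (simp add: r_def)
qed

lemma per_TT_a: "TT (t + real_of_int k * \<tau>) = TT t" "a (t + real_of_int k * \<tau>) = a t"
  using shift_a[of "real_of_int k * \<tau>"] per_int by auto

lemma TT_lower: "TT 0 \<le> TT t"
  unfolding TT_def using min0[of t] range[of 0] range[of t] pi_gt_zero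
  by (intro tan_mono_le) linarith+

lemma bound_periodic:
  fixes g :: "real \<Rightarrow> real"
  assumes cg: "\<And>t. isCont g t" and pg: "\<And>t k. g (t + real_of_int k * \<tau>) = g t"
  obtains M where "\<And>t. g t \<le> M"
proof -
  have "continuous_on {0..\<tau>} g" using cg by (intro continuous_at_imp_continuous_on) auto
  then obtain z where z: "z \<in> {0..\<tau>}" "\<And>y. y \<in> {0..\<tau>} \<Longrightarrow> g y \<le> g z"
    using continuous_attains_sup[of "{0..\<tau>}" g] tau_pos by auto
  have "g t \<le> g z" for t
  proof -
    obtain r k where "r \<in> {0..\<tau>}" "t = r + real_of_int k * \<tau>" using reduce by blast
    then show ?thesis using pg[of r k] z(2)[of r] by simp
  qed
  then show ?thesis using that by blast
qed

definition c0 where "c0 = TT 0"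
definition d0 where "d0 = (SOME M. \<forall>t. TT t \<le> M)"
definition Ca where "Ca = (SOME M. \<forall>t. \<bar>a t\<bar> \<le> M)"

lemma TT_range: "TT t \<in> {c0..d0}"
proof -
  obtain M where "\<And>t. TT t \<le> M"
    using bound_periodic[of TT] cont_TT per_TT_a(1) by blast
  then have "\<exists>M. \<forall>t. TT t \<le> M" by blast
  then have "\<forall>t. TT t \<le> d0" unfolding d0_def by (rule someI_ex)
  then show ?thesis using TT_lower c0_def by auto
qed

lemma a_bound: "\<bar>a t\<bar> \<le> Ca"
proof -
  have c: "isCont (\<lambda>t. \<bar>a t\<bar>) t" for t by (intro isCont_rabs cont_a)
  have pg: "\<bar>a (t + real_of_int k * \<tau>)\<bar> = \<bar>a t\<bar>" for t k using per_TT_a(2) by simp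
  obtain M where "\<And>t. \<bar>a t\<bar> \<le> M"
    using bound_periodic[of "\<lambda>t. \<bar>a t\<bar>", OF c pg] by blast
  then have "\<exists>M. \<forall>t. \<bar>a t\<bar> \<le> M" by blast
  then have "\<forall>t. \<bar>a t\<bar> \<le> Ca" unfolding Ca_def by (rule someI_ex)
  then show ?thesis by blast
qed

lemma c0_pos: "c0 > 0" unfolding c0_def by (rule TT_pos)
lemma Ca_nn: "Ca \<ge> 0" using a_bound[of 0] by linarith

lemma sub_pos: "{c0..d0} \<subseteq> {0<..}" using c0_pos by auto

lemma ff_lip: obtains L where "L \<ge> 0" "\<And>p q. p \<in> {c0..d0} \<Longrightarrow> q \<in> {c0..d0} \<Longrightarrow> \<bar>fF p - fF q\<bar> \<le> L * \<bar>p - q\<bar>"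
proof -
  have "continuous_on {c0..d0} (ff1 n \<mu> H)"
    using cont_ff1[OF n2 mu Hp] sub_pos by (rule continuous_on_subset)
  then obtain L where L: "\<And>p q. p \<in> {c0..d0} \<Longrightarrow> q \<in> {c0..d0} \<Longrightarrow> \<bar>fF p - fF q\<bar> \<le> L * \<bar>p - q\<bar>"
    using deriv_lip[of c0 d0 fF "ff1 n \<mu> H"] dff sub_pos by blast
  show ?thesis
  proof (rule that[of "\<bar>L\<bar>"])
    fix p q assume "p \<in> {c0..d0}" "q \<in> {c0..d0}"
    then have "\<bar>fF p - fF q\<bar> \<le> L * \<bar>p - q\<bar>" by (rule L)
    also have "\<dots> \<le> \<bar>L\<bar> * \<bar>p - q\<bar>" by (intro mult_right_mono) auto
    finally show "\<bar>fF p - fF q\<bar> \<le> \<bar>L\<bar> * \<bar>p - q\<bar>" .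
  qed simp
qed

lemma kf_lip: obtains L where "L \<ge> 0" "\<And>p q. p \<in> {c0..d0} \<Longrightarrow> q \<in> {c0..d0} \<Longrightarrow> \<bar>kF p - kF q\<bar> \<le> L * \<bar>p - q\<bar>"
proof -
  have "continuous_on {c0..d0} (kf1 n \<mu> H)"
    using cont_kf1[OF n2 mu Hp] sub_pos by (rule continuous_on_subset)
  then obtain L where L: "\<And>p q. p \<in> {c0..d0} \<Longrightarrow> q \<in> {c0..d0} \<Longrightarrow> \<bar>kF p - kF q\<bar> \<le> L * \<bar>p - q\<bar>"
    using deriv_lip[of c0 d0 kF "kf1 n \<mu> H"] dkf sub_pos by blast
  show ?thesis
  proof (rule that[of "\<bar>L\<bar>"])
    fix p q assume "p \<in> {c0..d0}" "q \<in> {c0..d0}"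
    then have "\<bar>kF p - kF q\<bar> \<le> L * \<bar>p - q\<bar>" by (rule L)
    also have "\<dots> \<le> \<bar>L\<bar> * \<bar>p - q\<bar>" by (intro mult_right_mono) auto
    finally show "\<bar>kF p - kF q\<bar> \<le> \<bar>L\<bar> * \<bar>p - q\<bar>" .
  qed simp
qed

lemma ff_bound: obtains F0 where "F0 \<ge> 0" "\<And>z. z \<in> {c0..d0} \<Longrightarrow> \<bar>fF z\<bar> \<le> F0"
proof -
  have "continuous_on {c0..d0} (\<lambda>z. \<bar>fF z\<bar>)"
    using continuous_on_subset[OF cont_ff[OF n2 mu Hp] sub_pos] by (intro continuous_intros)
  moreover have "{c0..d0} \<noteq> {}" using TT_range[of 0] by auto
  ultimately obtain z0 where "z0 \<in> {c0..d0}" "\<And>y. y \<in> {c0..d0} \<Longrightarrow> \<bar>fF y\<bar> \<le> \<bar>fF z0\<bar>"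
    using continuous_attains_sup[of "{c0..d0}" "\<lambda>z. \<bar>fF z\<bar>"] by auto
  then show ?thesis using that[of "\<bar>fF z0\<bar>"] by auto
qed

lemma reflect:
  assumes z: "a t0 = 0"
  shows "TT (2 * t0 - t) = TT t \<and> a (2 * t0 - t) = - a t"
proof -
  obtain Lf where Lf: "Lf \<ge> 0" "\<And>p q. p \<in> {c0..d0} \<Longrightarrow> q \<in> {c0..d0} \<Longrightarrow> \<bar>fF p - fF q\<bar> \<le> Lf * \<bar>p - q\<bar>"
    using ff_lip by blast
  obtain Lk where Lk: "Lk \<ge> 0" "\<And>p q. p \<in> {c0..d0} \<Longrightarrow> q \<in> {c0..d0} \<Longrightarrow> \<bar>kF p - kF q\<bar> \<le> Lk * \<bar>p - q\<bar>"
    using kf_lip by blast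
  obtain F0 where F0: "F0 \<ge> 0" "\<And>z. z \<in> {c0..d0} \<Longrightarrow> \<bar>fF z\<bar> \<le> F0"
    using ff_bound by blast
  have dy: "((\<lambda>t. TT (2 * t0 - t)) has_real_derivative fF (TT (2 * t0 - t)) * (- a (2 * t0 - t))) (at t)" for t
  proof -
    have "((\<lambda>t. TT (2 * t0 - t)) has_real_derivative fF (TT (2 * t0 - t)) * a (2 * t0 - t) * (0 - 1)) (at t)"
      by (rule DERIV_chain2[OF dTT_f]) (auto intro!: derivative_eq_intros)
    then show ?thesis by simp
  qed
  have dv: "((\<lambda>t. - a (2 * t0 - t)) has_real_derivative kF (TT (2 * t0 - t))) (at t)" for t
  proof -
    have "((\<lambda>t. a (2 * t0 - t)) has_real_derivative kF (TT (2 * t0 - t)) * (0 - 1)) (at t)"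
      by (rule DERIV_chain2[OF da_k]) (auto intro!: derivative_eq_intros)
    then have "((\<lambda>t. - a (2 * t0 - t)) has_real_derivative - (kF (TT (2 * t0 - t)) * (0 - 1))) (at t)"
      by (rule DERIV_minus)
    then show ?thesis by simp
  qed
  have vb: "\<bar>- a (2 * t0 - t)\<bar> \<le> Ca" for t using a_bound by simp
  have i1: "TT t0 = TT (2 * t0 - t0)" by simp
  have i2: "a t0 = - a (2 * t0 - t0)" using z by simp
  have "TT t = TT (2 * t0 - t) \<and> a t = - a (2 * t0 - t)"
    by (rule ode_uniq[OF dTT_f da_k dy dv TT_range TT_range vb F0(2) Lf(2) Lk(2) Lf(1) Lk(1) F0(1) Ca_nn i1 i2])
  then show ?thesis by simp
qed


lemma p1_0: "p1 0 = 0"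
  by (rule DERIV_local_min[OF dphi[of 0], of 1]) (use min0 in auto)

lemma a_0: "a 0 = 0" using a_eq[of 0] p1_0 by simp

lemma a_zero_iff: "a t = 0 \<longleftrightarrow> p1 t = 0"
  using a_eq[of t] W_pos[OF TT_pos[of t]] by simp

lemma even_sym: "TT (- t) = TT t" "a (- t) = - a t"
  using reflect[OF a_0, of t] by simp_all

lemma zero_imp: assumes z: "a t0 = 0" shows "\<exists>k::int. t0 = real_of_int k * \<tau> / 2"
proof -
  define P where "P = 2 * t0"
  have perP: "\<phi> (t + P) = \<phi> t" for t
  proof -
    have "TT (2 * t0 - (- t)) = TT (- t)" using reflect[OF z, of "- t"] by simp
    then have "TT (t + P) = TT t" using even_sym(1)[of t] unfolding P_def by (simp add: algebra_simps)
    then show ?thesis by (rule tan_inj)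
  qed
  define k where "k = floor (P / \<tau>)"
  define r where "r = P - real_of_int k * \<tau>"
  have "real_of_int k \<le> P / \<tau>" "P / \<tau> < real_of_int k + 1" unfolding k_def by linarith+
  then have "real_of_int k * \<tau> \<le> P" "P < (real_of_int k + 1) * \<tau>"
    using tau_pos by (simp_all add: pos_le_divide_eq pos_divide_less_eq)
  then have r: "0 \<le> r" "r < \<tau>" unfolding r_def by (auto simp: algebra_simps)
  have perr: "\<phi> (t + r) = \<phi> t" for t
  proof -
    have "\<phi> (t + r) = \<phi> ((t + r) + real_of_int k * \<tau>)" by (rule per_int[symmetric])
    also have "(t + r) + real_of_int k * \<tau> = t + P" unfolding r_def by simp
    finally show ?thesis using perP by simp
  qed
  have "r = 0"
  proof (rule ccontr)
    assume "r \<noteq> 0"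
    then have "0 < r" using r by simp
    then obtain t where "\<phi> (t + r) \<noteq> \<phi> t" using tau_min r by blast
    then show False using perr by simp
  qed
  then have "t0 = real_of_int k * \<tau> / 2" using r_def P_def by simp
  then show ?thesis by blast
qed

lemma a_half: "a (\<tau> / 2) = 0"
proof -
  have "a (- (\<tau> / 2) + real_of_int 1 * \<tau>) = a (- (\<tau> / 2))" by (rule per_TT_a(2))
  then have "a (\<tau> / 2) = - a (\<tau> / 2)" using even_sym(2)[of "\<tau> / 2"] by simp
  then show ?thesis by simp
qed

lemma imp_zero: "a (real_of_int k * \<tau> / 2) = 0"
proof (cases "even k")
  case True
  then obtain j where j: "k = 2 * j" by (rule evenE)
  have "a (0 + real_of_int j * \<tau>) = a 0" by (rule per_TT_a(2))
  then show ?thesis using j a_0 by simp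
next
  case False
  then obtain j where j: "k = 2 * j + 1" by (rule oddE)
  have "a (\<tau> / 2 + real_of_int j * \<tau>) = a (\<tau> / 2)" by (rule per_TT_a(2))
  moreover have e: "real_of_int k * \<tau> / 2 = \<tau> / 2 + real_of_int j * \<tau>" using j by (simp add: algebra_simps)
  ultimately show ?thesis unfolding e using a_half by simp
qed

lemma part2: "\<forall>t. a t = 0 \<longleftrightarrow> (\<exists>k::int. t = real_of_int k * \<tau> / 2)"
  using zero_imp imp_zero by blast

lemma qf_inj: "y1 > 0 \<Longrightarrow> y2 > 0 \<Longrightarrow> qf n \<mu> H y1 = qf n \<mu> H y2 \<Longrightarrow> y1 = y2"
  using qf_strict[OF n2 mu Hp, of y1 y2] qf_strict[OF n2 mu Hp, of y2 y1]
  by (metis linorder_neqE_linordered_idom order_less_irrefl)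

lemma crit_iff: "deriv a t = 0 \<longleftrightarrow> qf n \<mu> H (TT t) = 0"
proof -
  define y where "y = TT t"
  have y: "y > 0" using TT_pos y_def by simp
  have w: "W y > 0" using W_pos y by simp
  have "kF y = (1 + y\<^sup>2) * y * qf n \<mu> H y / W y"
    unfolding kf_def Phf_qf[OF n2 mu Hp y] by simp
  moreover have "(1 + y\<^sup>2) * y / W y > 0" using y w by (intro divide_pos_pos mult_pos_pos) (auto intro: add_pos_nonneg)
  moreover have "1 + y\<^sup>2 > 0" by (simp add: add_pos_nonneg)
  ultimately have "kF y = 0 \<longleftrightarrow> qf n \<mu> H y = 0" using y w by (simp add: mult.commute)
  then show ?thesis using flat[of t] y_def by simp
qed

lemma crit_phi: assumes "lo \<le> s" "s < t" "t \<le> hi" "\<phi> s = \<phi> t"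
  shows "\<exists>\<xi>. lo < \<xi> \<and> \<xi> < hi \<and> a \<xi> = 0 \<and> s < \<xi> \<and> \<xi> < t"
proof -
  obtain z where z: "s < z" "z < t" "\<phi> t - \<phi> s = (t - s) * p1 z"
    using MVT2[of s t \<phi> p1] assms dphi by blast
  then have "p1 z = 0" using assms by simp
  then show ?thesis using z assms a_zero_iff by (intro exI[of _ z]) auto
qed

lemma inj1: assumes "s \<in> {0..\<tau>/2}" "t \<in> {0..\<tau>/2}" "\<phi> s = \<phi> t" shows "s = t"
proof (rule ccontr)
  assume ne: "s \<noteq> t"
  have "\<exists>\<xi>. 0 < \<xi> \<and> \<xi> < \<tau>/2 \<and> a \<xi> = 0"
  proof (cases "s < t")
    case True then show ?thesis using crit_phi[of 0 s t "\<tau>/2"] assms by force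
  next
    case False then have "t < s" using ne by simp
    then show ?thesis using crit_phi[of 0 t s "\<tau>/2"] assms by force
  qed
  then obtain \<xi> k where x: "0 < \<xi>" "\<xi> < \<tau>/2" "\<xi> = real_of_int k * \<tau> / 2" using zero_imp by blast
  then have "0 < real_of_int k" "real_of_int k < 1" using tau_pos
    by (auto simp: zero_less_mult_iff field_simps)
  then have "0 < k" "k < 1" by simp_all
  then show False by linarith
qed

lemma inj2: assumes "s \<in> {\<tau>/2..\<tau>}" "t \<in> {\<tau>/2..\<tau>}" "\<phi> s = \<phi> t" shows "s = t"
proof (rule ccontr)
  assume ne: "s \<noteq> t"
  have "\<exists>\<xi>. \<tau>/2 < \<xi> \<and> \<xi> < \<tau> \<and> a \<xi> = 0"
  proof (cases "s < t")
    case True then show ?thesis using crit_phi[of "\<tau>/2" s t \<tau>] assms by force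
  next
    case False then have "t < s" using ne by simp
    then show ?thesis using crit_phi[of "\<tau>/2" t s \<tau>] assms by force
  qed
  then obtain \<xi> k where x: "\<tau>/2 < \<xi>" "\<xi> < \<tau>" "\<xi> = real_of_int k * \<tau> / 2" using zero_imp by blast
  then have "1 < real_of_int k" "real_of_int k < 2" using tau_pos
    by (auto simp: field_simps)
  then have "1 < k" "k < 2" by simp_all
  then show False by linarith
qed

lemma a_tau: "a \<tau> = 0"
  using per_TT_a(2)[of 0 1] a_0 by simp

lemma part3: "\<exists>\<zeta>1 \<zeta>2. 0 < \<zeta>1 \<and> \<zeta>1 < \<tau> / 2 \<and> \<tau> / 2 < \<zeta>2 \<and> \<zeta>2 < \<tau>
             \<and> {t \<in> {0..\<tau>}. deriv a t = 0} = {\<zeta>1, \<zeta>2}"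
proof -
  have dak: "DERIV a x :> deriv a x" for x using da_k flat by simp
  obtain z1 where z1: "0 < z1" "z1 < \<tau>/2" "a (\<tau>/2) - a 0 = (\<tau>/2 - 0) * deriv a z1"
    using MVT2[of 0 "\<tau>/2" a "deriv a"] tau_pos dak by auto
  then have dz1: "deriv a z1 = 0" using a_half a_0 tau_pos by simp
  obtain z2 where z2: "\<tau>/2 < z2" "z2 < \<tau>" "a \<tau> - a (\<tau>/2) = (\<tau> - \<tau>/2) * deriv a z2"
    using MVT2[of "\<tau>/2" \<tau> a "deriv a"] tau_pos dak by auto
  then have dz2: "deriv a z2 = 0" using a_half a_tau tau_pos by simp
  have S: "{t \<in> {0..\<tau>}. deriv a t = 0} = {z1, z2}"
  proof
    show "{z1, z2} \<subseteq> {t \<in> {0..\<tau>}. deriv a t = 0}" using z1 z2 dz1 dz2 by auto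
    show "{t \<in> {0..\<tau>}. deriv a t = 0} \<subseteq> {z1, z2}"
    proof
      fix t assume t: "t \<in> {t \<in> {0..\<tau>}. deriv a t = 0}"
      then have qt: "qf n \<mu> H (TT t) = 0" using crit_iff by simp
      show "t \<in> {z1, z2}"
      proof (cases "t \<le> \<tau>/2")
        case True
        have "qf n \<mu> H (TT z1) = 0" using crit_iff dz1 by simp
        then have "TT t = TT z1" using qt qf_inj TT_pos by metis
        then have "\<phi> t = \<phi> z1" by (rule tan_inj)
        then have "t = z1" using inj1[of t z1] t True z1 by auto
        then show ?thesis by simp
      next
        case False
        have "qf n \<mu> H (TT z2) = 0" using crit_iff dz2 by simp
        then have "TT t = TT z2" using qt qf_inj TT_pos by metis
        then have "\<phi> t = \<phi> z2" by (rule tan_inj)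
        then have "t = z2" using inj2[of t z2] t False z2 by auto
        then show ?thesis by simp
      qed
    qed
  qed
  show ?thesis using z1 z2 S by blast
qed

end

lemma alg_m:
  fixes c W W1 T s u K q \<sigma> :: real
  assumes c: "c > 0" and W: "W > 0" and sg: "\<sigma> = 1 / (c * W)" and s: "s = T * c" and u: "u = 1 / c\<^sup>2"
    and K: "K = u * (T - W * W1) / W" and q: "q = (K - (\<sigma>\<^sup>2 - 1) * u * W1) / W"
  shows "(s * \<sigma>\<^sup>2 - c * q) / \<sigma> ^ 3 = W1"
  using c W unfolding sg s u K q by (simp add: field_simps power2_eq_square power3_eq_cube)


lemma alg_j:
  fixes m T W W1 W2 :: real
  assumes T: "T > 0" and id: "m * W = m * T * W1 + T\<^sup>2 * W2"
  shows "m * (T - W * W1) / T + (1 - W1\<^sup>2 - W * W2) + W1\<^sup>2 + m * (W / T)\<^sup>2 - (m + 1) = 0"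
proof -
  have W2: "W2 = (m * W - m * T * W1) / T\<^sup>2" using id T by (simp add: field_simps)
  show ?thesis unfolding W2 using T by (simp add: field_simps power2_eq_square)
qed

context L35
begin

definition R1 where "R1 t = exp t * (sin (\<phi> t) + cos (\<phi> t) * p1 t)"
definition Y1 where "Y1 t = exp t * (cos (\<phi> t) - sin (\<phi> t) * p1 t)"
definition R2 where "R2 t = exp t * (sin (\<phi> t) + 2 * cos (\<phi> t) * p1 t - sin (\<phi> t) * (p1 t)\<^sup>2 + cos (\<phi> t) * p2 t)"
definition Y2 where "Y2 t = exp t * (cos (\<phi> t) - 2 * sin (\<phi> t) * p1 t - cos (\<phi> t) * (p1 t)\<^sup>2 - sin (\<phi> t) * p2 t)"

lemma dR: "(prof_r \<phi> has_real_derivative R1 t) (at t)"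
  unfolding prof_r_def[abs_def] R1_def
  by (rule derivative_eq_intros dphi refl)+ (simp add: algebra_simps)

lemma dY: "(prof_y \<phi> has_real_derivative Y1 t) (at t)"
  unfolding prof_y_def[abs_def] Y1_def
  by (rule derivative_eq_intros dphi refl)+ (simp add: algebra_simps)

lemma deriv_R: "deriv (prof_r \<phi>) = R1" using dR DERIV_imp_deriv by blast
lemma deriv_Y: "deriv (prof_y \<phi>) = Y1" using dY DERIV_imp_deriv by blast

lemma dR1: "(R1 has_real_derivative R2 t) (at t)"
  unfolding R1_def[abs_def] R2_def
  by (rule derivative_eq_intros dphi dp1 refl)+ (simp add: algebra_simps power2_eq_square)

lemma dY1: "(Y1 has_real_derivative Y2 t) (at t)"
  unfolding Y1_def[abs_def] Y2_def
  by (rule derivative_eq_intros dphi dp1 refl)+ (simp add: algebra_simps power2_eq_square)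

lemma deriv_R1: "deriv R1 = R2" using dR1 DERIV_imp_deriv by blast
lemma deriv_Y1: "deriv Y1 = Y2" using dY1 DERIV_imp_deriv by blast

lemma speed: "prof_speed \<phi> t = exp t * sqrt (1 + (p1 t)\<^sup>2)"
proof -
  have e: "(R1 t)\<^sup>2 + (Y1 t)\<^sup>2 = (exp t)\<^sup>2 * ((sin (\<phi> t))\<^sup>2 + (cos (\<phi> t))\<^sup>2) * (1 + (p1 t)\<^sup>2)"
    unfolding R1_def Y1_def by (simp only: power2_eq_square algebra_simps)
  have "(R1 t)\<^sup>2 + (Y1 t)\<^sup>2 = (exp t)\<^sup>2 * (1 + (p1 t)\<^sup>2)" unfolding e by simp
  then show ?thesis unfolding prof_speed_def deriv_R deriv_Y by (simp add: real_sqrt_mult)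
qed


lemma sigma_eq: "sqrt (1 + (p1 t)\<^sup>2) = 1 / (cos (\<phi> t) * W (TT t))"
proof -
  have c: "cos (\<phi> t) > 0" by (rule cos_pos)
  have w: "W (TT t) > 0" using W_pos TT_pos by blast
  have s: "sqrt (1 + (p1 t)\<^sup>2) > 0" by (simp add: add_pos_nonneg)
  show ?thesis using Wid[of t] c w s by (simp add: field_simps)
qed

lemma p2_eq: "p2 t = (kF (TT t) - (p1 t)\<^sup>2 * (1 + (TT t)\<^sup>2) * W1 (TT t)) / W (TT t)"
proof -
  have w: "W (TT t) > 0" using W_pos TT_pos by blast
  have "A1 t = kF (TT t)" using flat[of t] deriv_a[of t] by simp
  then show ?thesis unfolding A1_def using w by (simp add: field_simps power2_eq_square)
qed

lemma metB_eq: "metB \<phi> t = TT t"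
  unfolding metB_def prof_r_def prof_y_def TT_def tan_def by simp

lemma metA_eq: "metA \<phi> t = fF (TT t)"
proof -
  have c: "cos (\<phi> t) > 0" by (rule cos_pos)
  have w: "W (TT t) > 0" using W_pos TT_pos by blast
  have "metA \<phi> t = sqrt (1 + (p1 t)\<^sup>2) / cos (\<phi> t)"
    unfolding metA_def speed prof_y_def by simp
  also have "\<dots> = (1 / (cos (\<phi> t))\<^sup>2) / W (TT t)" unfolding sigma_eq using c w
    by (simp add: field_simps power2_eq_square)
  also have "\<dots> = fF (TT t)" unfolding ff_def one_TT by simp
  finally show ?thesis .
qed

lemma kp_eq: "hyp_kappa_p \<phi> t = W (TT t) / TT t"
proof -
  define c where "c = cos (\<phi> t)"
  define s where "s = sin (\<phi> t)"
  define p where "p = p1 t"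
  define \<sigma> where "\<sigma> = sqrt (1 + p\<^sup>2)"
  have c: "c > 0" unfolding c_def by (rule cos_pos)
  have sp: "s > 0" unfolding s_def by (rule sin_pos)
  have w: "W (TT t) > 0" using W_pos TT_pos by blast
  have sg: "\<sigma> > 0" unfolding \<sigma>_def by (simp add: add_pos_nonneg)
  have sc: "s\<^sup>2 + c\<^sup>2 = 1" unfolding s_def c_def by simp
  have "hyp_kappa_p \<phi> t = exp t * c * ((exp t * (c - s * p)) / (exp t * \<sigma>)) / (exp t * s)
      + exp t * (s + c * p) / (exp t * \<sigma>)"
    unfolding hyp_kappa_p_def eucl_kappa_p_def nrm_r_def nrm_y_def speed deriv_R deriv_Y R1_def Y1_def
      prof_y_def prof_r_def c_def s_def p_def \<sigma>_def by simp
  also have "\<dots> = (s\<^sup>2 + c\<^sup>2) / (\<sigma> * s)" using c sp sg by (simp add: field_simps power2_eq_square)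
  also have "\<dots> = 1 / (\<sigma> * s)" using sc by simp
  also have "\<dots> = c * W (TT t) / s" unfolding \<sigma>_def p_def sigma_eq c_def[symmetric] using c w sp
    by (simp add: field_simps)
  also have "\<dots> = W (TT t) / TT t" unfolding TT_def tan_def s_def c_def using c sp
    by (simp add: field_simps)
  finally show ?thesis .
qed

lemma km_eq: "hyp_kappa_m \<phi> t = W1 (TT t)"
proof -
  define c where "c = cos (\<phi> t)"
  define s where "s = sin (\<phi> t)"
  define p where "p = p1 t"
  define q where "q = p2 t"
  define e where "e = exp t"
  define \<sigma> where "\<sigma> = sqrt (1 + p\<^sup>2)"
  have c: "c > 0" unfolding c_def by (rule cos_pos)
  have sp: "s > 0" unfolding s_def by (rule sin_pos)
  have e: "e > 0" unfolding e_def by simp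
  have w: "W (TT t) > 0" using W_pos TT_pos by blast
  have sg: "\<sigma> > 0" unfolding \<sigma>_def by (simp add: add_pos_nonneg)
  have sg2: "\<sigma>\<^sup>2 = 1 + p\<^sup>2" unfolding \<sigma>_def by (simp add: add_nonneg_nonneg)
  have sc: "s\<^sup>2 + c\<^sup>2 = 1" unfolding s_def c_def by simp
  have cross: "R1 t * Y2 t - Y1 t * R2 t = - e\<^sup>2 * (s\<^sup>2 + c\<^sup>2) * (p + p ^ 3 + q)"
    unfolding R1_def Y1_def R2_def Y2_def e_def[symmetric] s_def[symmetric] c_def[symmetric]
      p_def[symmetric] q_def[symmetric] power2_eq_square power3_eq_cube
    by algebra
  have "hyp_kappa_m \<phi> t = e * c * ((- e\<^sup>2 * (p + p ^ 3 + q)) / (e * \<sigma>) ^ 3) + e * (s + c * p) / (e * \<sigma>)"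
    unfolding hyp_kappa_m_def eucl_kappa_m_def nrm_y_def speed deriv_R deriv_Y deriv_R1 deriv_Y1 cross sc
    unfolding prof_y_def R1_def e_def[symmetric] c_def[symmetric] s_def[symmetric] p_def[symmetric] \<sigma>_def[symmetric]
    by simp
  also have "\<dots> = (- c * (p + p ^ 3 + q) + (s + c * p) * \<sigma>\<^sup>2) / \<sigma> ^ 3"
    using e sg by (simp add: field_simps power2_eq_square power3_eq_cube)
  also have "\<dots> = (s * \<sigma>\<^sup>2 - c * q) / \<sigma> ^ 3"
    unfolding sg2 by (simp add: algebra_simps power2_eq_square power3_eq_cube)
  also have "\<dots> = W1 (TT t)"
  proof (rule alg_m[OF c w])
    show "\<sigma> = 1 / (c * W (TT t))" unfolding \<sigma>_def p_def c_def by (rule sigma_eq)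
    show "s = TT t * c" unfolding TT_def tan_def s_def c_def using c c_def by simp
    show "1 + (TT t)\<^sup>2 = 1 / c\<^sup>2" unfolding c_def by (rule one_TT)
    show "kF (TT t) = (1 + (TT t)\<^sup>2) * (TT t - W (TT t) * W1 (TT t)) / W (TT t)"
      unfolding kf_def Phf_def ..
    show "q = (kF (TT t) - (\<sigma>\<^sup>2 - 1) * (1 + (TT t)\<^sup>2) * W1 (TT t)) / W (TT t)"
      unfolding q_def sg2 p_def p2_eq by simp
  qed
  finally show ?thesis .
qed


definition Psi where "Psi y = y ^ (n - 1) * Ph y"
definition Psi1 where "Psi1 y = real (n - 1) * y ^ (n - 1 - 1) * Ph y + y ^ (n - 1) * Ph1 y"

lemma dPsi: "y > 0 \<Longrightarrow> (Psi has_real_derivative Psi1 y) (at y)"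
  unfolding Psi_def[abs_def] Psi1_def
  by (rule derivative_eq_intros dPh refl | assumption)+ (simp add: algebra_simps)

lemma inner_eq: "(\<lambda>s. metB \<phi> s ^ (n - 1) / metA \<phi> s * deriv a s) = (\<lambda>s. Psi (TT s))"
proof
  fix s
  have w: "W (TT s) > 0" using W_pos TT_pos by blast
  have u: "1 + (TT s)\<^sup>2 > 0" by (simp add: add_pos_nonneg)
  show "metB \<phi> s ^ (n - 1) / metA \<phi> s * deriv a s = Psi (TT s)"
    unfolding metB_eq metA_eq flat ff_def kf_def Psi_def
  proof -
    have g: "x / (uu / ww) * (uu * pp / ww) = x * pp" if "uu \<noteq> 0" "ww \<noteq> 0" for x uu ww pp :: real
      using that by (simp add: field_simps)
    show "TT s ^ (n - 1) / ((1 + (TT s)\<^sup>2) / W (TT s)) * ((1 + (TT s)\<^sup>2) * Ph (TT s) / W (TT s)) =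
        TT s ^ (n - 1) * Ph (TT s)" using g w u by simp
  qed
qed

lemma lap_eq: "lap_rot n \<phi> a t = - (Psi1 (TT t) / (TT t) ^ (n - 1)) * a t"
proof -
  have d: "((\<lambda>s. Psi (TT s)) has_real_derivative Psi1 (TT t) * (fF (TT t) * a t)) (at t)"
    by (rule DERIV_chain2[OF dPsi[OF TT_pos] dTT_f])
  have w: "W (TT t) > 0" using W_pos TT_pos by blast
  have u: "1 + (TT t)\<^sup>2 > 0" by (simp add: add_pos_nonneg)
  have f: "fF (TT t) > 0" unfolding ff_def using w u by simp
  have T: "TT t ^ (n - 1) > 0" using TT_pos by simp
  show ?thesis unfolding lap_rot_def inner_eq unfolding DERIV_imp_deriv[OF d] metA_eq metB_eq
    using f T by (simp add: field_simps)
qed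

lemma V_eq: "potV n \<phi> t = (W1 (TT t))\<^sup>2 + real (n - 1) * (W (TT t) / TT t)\<^sup>2 - real n"
  unfolding potV_def sff_sq_def km_eq kp_eq ..

lemma Psi1_div: "y > 0 \<Longrightarrow> Psi1 y / y ^ (n - 1) = real (n - 1) * Ph y / y + Ph1 y"
proof -
  assume y: "y > 0"
  obtain j where j: "n = Suc (Suc j)" using n2 by (metis add_2_eq_Suc le_iff_add)
  show ?thesis unfolding Psi1_def unfolding j using y by (simp add: field_simps)
qed

lemma part1: "\<forall>t. lap_rot n \<phi> a t - potV n \<phi> t * a t = 0"
proof
  fix t
  define y where "y = TT t"
  have y: "y > 0" unfolding y_def by (rule TT_pos)
  have rn: "real n = real (n - 1) + 1" using n2 by simp
  have key: "real (n - 1) * Ph y / y + Ph1 y + ((W1 y)\<^sup>2 + real (n - 1) * (W y / y)\<^sup>2 - real n) = 0"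
    using alg_j[OF y W_identity[OF n2 mu Hp y]] unfolding Phf_def Ph1f_def rn by (simp add: algebra_simps)
  have "lap_rot n \<phi> a t - potV n \<phi> t * a t
      = - (real (n - 1) * Ph y / y + Ph1 y + ((W1 y)\<^sup>2 + real (n - 1) * (W y / y)\<^sup>2 - real n)) * a t"
    unfolding lap_eq V_eq y_def[symmetric] Psi1_div[OF y] by (simp add: algebra_simps)
  also have "\<dots> = 0" unfolding key by simp
  finally show "lap_rot n \<phi> a t - potV n \<phi> t * a t = 0" .
qed

end

theorem lemma3p5:
  fixes n :: nat and H \<mu> \<tau> :: real and \<phi> a :: "real \<Rightarrow> real"
  assumes n2: "n \<ge> 2" and H1: "H > 1" and mu: "\<mu> > 0"
    and smooth: "\<And>k t. (deriv ^^ k) \<phi> differentiable (at t)"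
    and range: "\<And>t. 0 < \<phi> t \<and> \<phi> t < pi / 2"
    and ode: "\<And>t. \<mu> = tan (\<phi> t) ^ (n - 1) / (cos (\<phi> t) * sqrt (1 + (deriv \<phi> t)\<^sup>2))
                     - H * tan (\<phi> t) ^ n"
    and nonconst: "\<exists>s t. \<phi> s \<noteq> \<phi> t"
    and min0: "\<And>t. \<phi> 0 \<le> \<phi> t"
    and tau_pos: "\<tau> > 0"
    and periodic: "\<And>t. \<phi> (t + \<tau>) = \<phi> t"
    and tau_min: "\<And>T. 0 < T \<Longrightarrow> T < \<tau> \<Longrightarrow> \<exists>t. \<phi> (t + T) \<noteq> \<phi> t"
    and a_def: "\<And>t. a t = deriv \<phi> t / (cos (\<phi> t) * sqrt (1 + (deriv \<phi> t)\<^sup>2))"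
  shows "(\<forall>t. lap_rot n \<phi> a t - potV n \<phi> t * a t = 0)
       \<and> (\<forall>t. a t = 0 \<longleftrightarrow> (\<exists>k::int. t = real_of_int k * \<tau> / 2))
       \<and> (\<exists>\<zeta>1 \<zeta>2. 0 < \<zeta>1 \<and> \<zeta>1 < \<tau> / 2 \<and> \<tau> / 2 < \<zeta>2 \<and> \<zeta>2 < \<tau>
             \<and> {t \<in> {0..\<tau>}. deriv a t = 0} = {\<zeta>1, \<zeta>2})"
  proof -
  interpret L: L35 n H \<mu> \<tau> \<phi> a
    by (rule L35.intro; fact)
  show ?thesis using L.part1 L.part2 L.part3 by blast
qed

end
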